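(* Let $A,B$ be noncommuting matrices in $\mathrm{SL}_2\mathbb{R}$, both with trace $\ge 2$. Then the pair $A,B$ is coherently oriented if and only if there exists $C\in\mathrm{SL}_2\mathbb{R}$ such that $CAC^{-1}$ and $CBC^{-1}$ have nonnegative entries.
   Context: $\mathrm{SL}_2\mathbb{R}$ acts on $\partial\mathcal{H}=\mathbb{P}^1\mathbb{R}$ by Möbius transformations $\begin{pmatrix}a&b\\c&d\end{pmatrix}*z=(az+b)/(cz+d)$. For a hyperbolic matrix $A$ (trace $>2$), $\alpha^+$ and $\alpha^-$ denote its attracting and repelling fixed points in $\partial\mathcal{H}$; for a parabolic $A$ (trace $2$, $A\neq I$), $\alpha^+=\alpha^-$ is its unique fixed point; similarly $\beta^\pm$ for $B$. The circle $\partial\mathcal{H}$ is cyclically (counterclockwise) ordered, and for distinct $\alpha,\beta$ the closed interval $[\alpha,\beta]$ consists of $\alpha,\beta$ and the points met travelling counterclockwise from $\alpha$ to $\beta$. If $\alpha^+=\beta^+$ let $I^+=\{\alpha^+\}$; otherwise $I^+$ is the one of the intervals $[\alpha^+,\beta^+]$, $[\beta^+,\alpha^+]$ mapped into itself by both $A$ and $B$, if such exists (else undefined). $I^-$ is defined likewise using $A^{-1},B^{-1}$ and $\alpha^-,\beta^-$. The pair $A,B$ is coherently oriented if both $I^+$ and $I^-$ are defined. *)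

theory Defs
  imports "HOL-Analysis.Analysis"
begin

text \<open>Model of the boundary circle P^1(R) = R \<union> {\<infinity>}: Some x is the real point x,
  None is \<infinity>. Matrices in SL_2(R) are elements of real^2^2 with determinant 1.\<close>

definition proj_pt :: "real^2 \<Rightarrow> real option" where
  "proj_pt v = (if v$2 = 0 then None else Some (v$1 / v$2))"

definition mob :: "real^2^2 \<Rightarrow> real option \<Rightarrow> real option" where
  "mob M z = (case z of
      None \<Rightarrow> (if M$2$1 = 0 then None else Some (M$1$1 / M$2$1))
    | Some x \<Rightarrow> (if M$2$1 * x + M$2$2 = 0 then None
                 else Some ((M$1$1 * x + M$1$2) / (M$2$1 * x + M$2$2))))"

definition attr_pt :: "real^2^2 \<Rightarrow> real option \<Rightarrow> bool" where
  "attr_pt M p \<longleftrightarrow>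
     (trace M > 2 \<and> (\<exists>v l. v \<noteq> 0 \<and> l > 1 \<and> M *v v = l *\<^sub>R v \<and> p = proj_pt v))
   \<or> (trace M = 2 \<and> M \<noteq> mat 1 \<and> mob M p = p)"

definition rep_pt :: "real^2^2 \<Rightarrow> real option \<Rightarrow> bool" where
  "rep_pt M p \<longleftrightarrow> attr_pt (matrix_inv M) p"

text \<open>Order on R \<union> {\<infinity>} with \<infinity> as largest element; counterclockwise travel on the
  boundary of the upper half plane is increasing order on R, then \<infinity>.\<close>
fun le_ext :: "real option \<Rightarrow> real option \<Rightarrow> bool" where
  "le_ext _ None = True"
| "le_ext None (Some _) = False"
| "le_ext (Some x) (Some y) = (x \<le> y)"

text \<open>Closed counterclockwise interval [a,b] for distinct a, b.\<close>
definition cint :: "real option \<Rightarrow> real option \<Rightarrow> real option set" where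
  "cint a b = (if le_ext a b then {z. le_ext a z \<and> le_ext z b}
               else {z. le_ext a z \<or> le_ext z b})"

definition interval_defined ::
  "real^2^2 \<Rightarrow> real^2^2 \<Rightarrow> real option \<Rightarrow> real option \<Rightarrow> bool" where
  "interval_defined M N a b \<longleftrightarrow>
     a = b \<or>
     (mob M ` cint a b \<subseteq> cint a b \<and> mob N ` cint a b \<subseteq> cint a b) \<or>
     (mob M ` cint b a \<subseteq> cint b a \<and> mob N ` cint b a \<subseteq> cint b a)"

definition coherently_oriented :: "real^2^2 \<Rightarrow> real^2^2 \<Rightarrow> bool" where
  "coherently_oriented A B \<longleftrightarrow>
     (\<exists>ap bp. attr_pt A ap \<and> attr_pt B bp \<and> interval_defined A B ap bp) \<and>
     (\<exists>am bm. rep_pt A am \<and> rep_pt B bm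
        \<and> interval_defined (matrix_inv A) (matrix_inv B) am bm)"

end

theory Submission imports Defs begin

lemma mm_entry: "((M::real^2^2) ** N)$i$j = M$i$1 * N$1$j + M$i$2 * N$2$j"
  by (simp add: matrix_matrix_mult_def sum_2)
lemma mv_entry: "((M::real^2^2) *v v)$i = M$i$1 * v$1 + M$i$2 * v$2"
  by (simp add: matrix_vector_mult_def sum_2)
lemma trace2: "trace (M::real^2^2) = M$1$1 + M$2$2" by (simp add: trace_def sum_2)
lemma mat1_entry: "(mat 1 :: real^2^2)$i$j = (if i = j then 1 else 0)" by (simp add: mat_def)
lemma vec2_eq: "(u::real^2) = v \<longleftrightarrow> u$1 = v$1 \<and> u$2 = v$2" by (simp add: vec_eq_iff forall_2)
lemma mat2_eq: "(M::real^2^2) = N \<longleftrightarrow> M$1$1 = N$1$1 \<and> M$1$2 = N$1$2 \<and> M$2$1 = N$2$1 \<and> M$2$2 = N$2$2"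
  by (simp add: vec_eq_iff forall_2)
lemma det2: "det (M::real^2^2) = M$1$1 * M$2$2 - M$1$2 * M$2$1" by (rule det_2)

definition mk :: "real \<Rightarrow> real \<Rightarrow> real \<Rightarrow> real \<Rightarrow> real^2^2" where
  "mk a b c d = (\<chi> i j. if i = 1 then (if j = 1 then a else b) else (if j = 1 then c else d))"
lemma mk_simps[simp]: "mk a b c d $1$1 = a" "mk a b c d $1$2 = b" "mk a b c d $2$1 = c" "mk a b c d $2$2 = d"
  by (simp_all add: mk_def)

definition vec2 :: "real \<Rightarrow> real \<Rightarrow> real^2" where "vec2 x y = (\<chi> i. if i = 1 then x else y)"
lemma vec2_simps[simp]: "vec2 x y $ 1 = x" "vec2 x y $ 2 = y" by (simp_all add: vec2_def)

lemmas ent = mm_entry mv_entry trace2 mat1_entry det2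

lemma inv_unique: fixes M X :: "real^2^2" assumes "M ** X = mat 1" shows "matrix_inv M = X"
proof -
  have XM: "X ** M = mat 1" using assms matrix_left_right_inverse by blast
  have h: "M ** matrix_inv M = mat 1 \<and> matrix_inv M ** M = mat 1"
    unfolding matrix_inv_def by (rule someI[of _ X]) (simp add: assms XM)
  have "matrix_inv M = matrix_inv M ** (M ** X)" by (simp add: assms)
  also have "\<dots> = X" by (simp add: matrix_mul_assoc h)
  finally show ?thesis .
qed

lemma inv_help: "(\<delta>::real) \<noteq> 0 \<Longrightarrow> \<delta> = a*d - b*c \<Longrightarrow>
  a*(d/\<delta>) + b*(-c/\<delta>) = 1 \<and> a*(-b/\<delta>) + b*(a/\<delta>) = 0 \<and> c*(d/\<delta>) + d*(-c/\<delta>) = 0 \<and> c*(-b/\<delta>) + d*(a/\<delta>) = 1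
  \<and> (d/\<delta>)*a + (-b/\<delta>)*c = 1 \<and> (d/\<delta>)*b + (-b/\<delta>)*d = 0 \<and> (-c/\<delta>)*a + (a/\<delta>)*c = 0 \<and> (-c/\<delta>)*b + (a/\<delta>)*d = 1"
  by (auto simp: field_simps)

lemma inv_explicit: fixes M :: "real^2^2" assumes "det M \<noteq> 0"
  shows "matrix_inv M = mk (M$2$2/det M) (-M$1$2/det M) (-M$2$1/det M) (M$1$1/det M)"
proof (rule inv_unique)
  show "M ** mk (M$2$2/det M) (-M$1$2/det M) (-M$2$1/det M) (M$1$1/det M) = mat 1"
    using inv_help[OF assms det2] by (simp add: mat2_eq mm_entry mat1_entry)
qed

lemma minv_r: fixes M :: "real^2^2" assumes "det M \<noteq> 0" shows "M ** matrix_inv M = mat 1"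
  using inv_help[OF assms det2] by (simp add: inv_explicit[OF assms] mat2_eq mm_entry mat1_entry)

lemma minv_l: fixes M :: "real^2^2" assumes "det M \<noteq> 0" shows "matrix_inv M ** M = mat 1"
  using minv_r[OF assms] matrix_left_right_inverse by blast

lemma det_minv: fixes M :: "real^2^2" assumes "det M \<noteq> 0" shows "det (matrix_inv M) = 1 / det M"
proof -
  have "det M * det (matrix_inv M) = 1" using minv_r[OF assms] by (metis det_I det_mul)
  then show ?thesis using assms by (simp add: field_simps)
qed

lemma minv_mult: fixes M N :: "real^2^2" assumes "det M \<noteq> 0" "det N \<noteq> 0"
  shows "matrix_inv (M ** N) = matrix_inv N ** matrix_inv M"
proof (rule inv_unique)
  have "M ** N ** (matrix_inv N ** matrix_inv M) = M ** (N ** matrix_inv N) ** matrix_inv M"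
    by (simp add: matrix_mul_assoc)
  then show "M ** N ** (matrix_inv N ** matrix_inv M) = mat 1" by (simp add: minv_r assms)
qed

lemma minv_minv: fixes M :: "real^2^2" assumes "det M \<noteq> 0" shows "matrix_inv (matrix_inv M) = M"
  by (rule inv_unique) (rule minv_l[OF assms])

lemma inv_det1: fixes M :: "real^2^2" assumes "det M = 1"
  shows "matrix_inv M = mk (M$2$2) (-M$1$2) (-M$2$1) (M$1$1)"
  using inv_explicit[of M] assms by simp

lemma trace_conj: fixes C M :: "real^2^2" assumes "det C \<noteq> 0"
  shows "trace (C ** M ** matrix_inv C) = trace M"
proof -
  have "trace (C ** M ** matrix_inv C) = trace (matrix_inv C ** (C ** M))" by (rule trace_mul_sym)
  also have "\<dots> = trace M" by (simp add: matrix_mul_assoc minv_l assms)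
  finally show ?thesis .
qed

lemma det_conj: fixes C M :: "real^2^2" assumes "det C \<noteq> 0"
  shows "det (C ** M ** matrix_inv C) = det M"
  using assms by (simp add: det_mul det_minv)

lemma trace_minv: fixes M :: "real^2^2" assumes "det M = 1" shows "trace (matrix_inv M) = trace M"
  by (simp add: inv_det1 assms trace2)

definition lift :: "real option \<Rightarrow> real^2" where
  "lift p = (case p of None \<Rightarrow> vec2 1 0 | Some x \<Rightarrow> vec2 x 1)"

lemma lift_simps[simp]: "lift None = vec2 1 0" "lift (Some x) = vec2 x 1" by (simp_all add: lift_def)

lemma proj_lift[simp]: "proj_pt (lift p) = p"
  by (cases p) (simp_all add: proj_pt_def)

lemma lift_nz[simp]: "lift p \<noteq> 0"
  by (cases p) (simp_all add: vec2_eq)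

lemma proj_scale: "\<mu> \<noteq> 0 \<Longrightarrow> proj_pt (\<mu> *\<^sub>R v) = proj_pt v"
  by (simp add: proj_pt_def)

lemma lift_proj: fixes v :: "real^2" assumes "v \<noteq> 0"
  shows "\<exists>\<mu>. \<mu> \<noteq> 0 \<and> v = \<mu> *\<^sub>R lift (proj_pt v)"
proof (cases "v$2 = 0")
  case True
  then have "v$1 \<noteq> 0" using assms by (simp add: vec2_eq)
  then show ?thesis using True by (intro exI[of _ "v$1"]) (simp add: proj_pt_def vec2_eq)
next
  case False
  then show ?thesis by (intro exI[of _ "v$2"]) (simp add: proj_pt_def vec2_eq)
qed

lemma proj_eq: fixes u w :: "real^2" assumes "u \<noteq> 0" "w \<noteq> 0" "proj_pt u = proj_pt w"
  shows "\<exists>\<mu>. \<mu> \<noteq> 0 \<and> u = \<mu> *\<^sub>R w"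
proof -
  obtain a where a: "a \<noteq> 0" "u = a *\<^sub>R lift (proj_pt u)" using lift_proj[OF assms(1)] by blast
  obtain b where b: "b \<noteq> 0" "w = b *\<^sub>R lift (proj_pt w)" using lift_proj[OF assms(2)] by blast
  have u: "u = a *\<^sub>R lift (proj_pt w)" using a assms(3) by simp
  have "(a / b) *\<^sub>R w = ((a / b) * b) *\<^sub>R lift (proj_pt w)" by (subst b(2)) simp
  also have "\<dots> = a *\<^sub>R lift (proj_pt w)" using b(1) by simp
  finally have "u = (a / b) *\<^sub>R w" using u by simp
  then show ?thesis using a b by (intro exI[of _ "a/b"]) simp
qed

lemma mob_lift: "mob M p = proj_pt (M *v lift p)"
  by (cases p) (simp_all add: mob_def proj_pt_def mv_entry add.commute)

lemma Mv_nz: fixes M :: "real^2^2" assumes "det M \<noteq> 0" "v \<noteq> 0" shows "M *v v \<noteq> 0"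
proof
  assume "M *v v = 0"
  then have "matrix_inv M *v (M *v v) = 0" by simp
  then show False using assms by (simp add: matrix_vector_mul_assoc minv_l)
qed

lemma mob_proj: fixes M :: "real^2^2" assumes "det M \<noteq> 0" "v \<noteq> 0"
  shows "mob M (proj_pt v) = proj_pt (M *v v)"
proof -
  obtain a where a: "a \<noteq> 0" "v = a *\<^sub>R lift (proj_pt v)" using lift_proj[OF assms(2)] by blast
  have "M *v v = a *\<^sub>R (M *v lift (proj_pt v))" using a(2)
    by (metis matrix_vector_mult_scaleR)
  then show ?thesis using a by (simp add: mob_lift proj_scale)
qed

lemma mob_mult: fixes M N :: "real^2^2" assumes "det M \<noteq> 0" "det N \<noteq> 0"
  shows "mob (M ** N) p = mob M (mob N p)"
proof -
  have "mob (M ** N) p = proj_pt (M *v (N *v lift p))" by (simp add: mob_lift matrix_vector_mul_assoc)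
  also have "\<dots> = mob M (proj_pt (N *v lift p))"
    by (rule mob_proj[symmetric]) (simp_all add: assms Mv_nz)
  also have "\<dots> = mob M (mob N p)" by (simp add: mob_lift)
  finally show ?thesis .
qed

lemma mob_id[simp]: "mob (mat 1) p = p" by (simp add: mob_lift)

lemma mob_inv_l: fixes M :: "real^2^2" assumes "det M \<noteq> 0" shows "mob (matrix_inv M) (mob M p) = p"
  using mob_mult[of "matrix_inv M" M p] assms by (simp add: det_minv minv_l)

lemma mob_inv_r: fixes M :: "real^2^2" assumes "det M \<noteq> 0" shows "mob M (mob (matrix_inv M) p) = p"
  using mob_mult[of M "matrix_inv M" p] assms by (simp add: det_minv minv_r)

lemma mob_inj: fixes M :: "real^2^2" assumes "det M \<noteq> 0" "mob M a = mob M b" shows "a = b"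
  by (metis assms mob_inv_l)

definition dt :: "real^2 \<Rightarrow> real^2 \<Rightarrow> real" where "dt u w = u$1 * w$2 - u$2 * w$1"

lemma dt_mv: "dt ((M::real^2^2) *v u) (M *v w) = det M * dt u w"
  by (simp add: dt_def mv_entry det2 algebra_simps)
lemma dt_scale: "dt (a *\<^sub>R u) (b *\<^sub>R w) = a * b * dt u w"
  by (simp add: dt_def algebra_simps)
lemma dt_vec2[simp]: "dt (vec2 a b) (vec2 c d) = a * d - b * c"
  by (simp add: dt_def)

definition tri :: "real option \<Rightarrow> real option \<Rightarrow> real option \<Rightarrow> real" where
  "tri a z b = dt (lift a) (lift z) * dt (lift z) (lift b) * dt (lift b) (lift a)"

lemma lift_mob: fixes M :: "real^2^2" assumes "det M \<noteq> 0"
  shows "\<exists>\<mu>. \<mu> \<noteq> 0 \<and> M *v lift p = \<mu> *\<^sub>R lift (mob M p)"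
  using lift_proj[OF Mv_nz[OF assms lift_nz]] by (simp add: mob_lift)

lemma tri_mob: fixes M :: "real^2^2" assumes "det M > 0"
  shows "(0 \<le> tri (mob M a) (mob M z) (mob M b)) \<longleftrightarrow> (0 \<le> tri a z b)"
proof -
  have d: "det M \<noteq> 0" using assms by simp
  obtain x where x: "x \<noteq> 0" "M *v lift a = x *\<^sub>R lift (mob M a)" using lift_mob[OF d] by blast
  obtain y where y: "y \<noteq> 0" "M *v lift z = y *\<^sub>R lift (mob M z)" using lift_mob[OF d] by blast
  obtain w where w: "w \<noteq> 0" "M *v lift b = w *\<^sub>R lift (mob M b)" using lift_mob[OF d] by blast
  have "det M ^ 3 * tri a z b = (x*y*w)^2 * tri (mob M a) (mob M z) (mob M b)"
  proof -
    have "det M ^ 3 * tri a z b = dt (M *v lift a) (M *v lift z) * dt (M *v lift z) (M *v lift b) * dt (M *v lift b) (M *v lift a)"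
      by (simp add: tri_def dt_mv power3_eq_cube algebra_simps)
    also have "\<dots> = (x*y*w)^2 * tri (mob M a) (mob M z) (mob M b)"
      unfolding x(2) y(2) w(2) dt_scale tri_def by (simp add: power2_eq_square algebra_simps)
    finally show ?thesis .
  qed
  moreover have "det M ^ 3 > 0" "(x*y*w)^2 > 0" using assms x y w by simp_all
  ultimately show ?thesis by (metis zero_le_mult_iff not_less less_eq_real_def)
qed

lemma cint_tri: assumes "a \<noteq> b" shows "z \<in> cint a b \<longleftrightarrow> 0 \<le> tri a z b"
proof (cases a)
  case None
  then obtain y where b: "b = Some y" using assms by (cases b) auto
  show ?thesis
    using None b by (cases z) (auto simp: cint_def tri_def)
next
  case (Some x)
  note a = this
  show ?thesis
  proof (cases b)
    case None
    then show ?thesis using a by (cases z) (auto simp: cint_def tri_def)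
  next
    case (Some y)
    then have xy: "x \<noteq> y" using a assms by simp
    show ?thesis
    proof (cases z)
      case None
      then show ?thesis using a Some xy by (auto simp: cint_def tri_def)
    next
      case (Some w)
      have "0 \<le> (x - w) * (w - y) * (y - x) \<longleftrightarrow> (if x \<le> y then x \<le> w \<and> w \<le> y else x \<le> w \<or> w \<le> y)"
      proof (cases "x < y")
        case True
        then have "0 \<le> (x - w) * (w - y) * (y - x) \<longleftrightarrow> 0 \<le> (x - w) * (w - y)"
          by (simp add: zero_le_mult_iff)
        also have "\<dots> \<longleftrightarrow> x \<le> w \<and> w \<le> y" using True by (auto simp: zero_le_mult_iff)
        finally show ?thesis using True by simp
      next
        case False
        then have yx: "y < x" using xy by simp
        then have "0 \<le> (x - w) * (w - y) * (y - x) \<longleftrightarrow> (x - w) * (w - y) \<le> 0"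
          by (simp add: mult_le_0_iff zero_le_mult_iff)
        also have "\<dots> \<longleftrightarrow> x \<le> w \<or> w \<le> y" using yx by (auto simp: mult_le_0_iff)
        finally show ?thesis using yx by simp
      qed
      then show ?thesis using a \<open>b = Some y\<close> Some by (simp add: cint_def tri_def)
    qed
  qed
qed

lemma cint_mob: fixes M :: "real^2^2" assumes "det M > 0" "a \<noteq> b"
  shows "mob M ` cint a b = cint (mob M a) (mob M b)"
proof -
  have d: "det M \<noteq> 0" using assms by simp
  have ne: "mob M a \<noteq> mob M b" using mob_inj[OF d] assms by blast
  show ?thesis
  proof
    show "mob M ` cint a b \<subseteq> cint (mob M a) (mob M b)"
      using assms ne by (auto simp: cint_tri tri_mob)
  next
    show "cint (mob M a) (mob M b) \<subseteq> mob M ` cint a b"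
    proof
      fix w assume w: "w \<in> cint (mob M a) (mob M b)"
      define z where "z = mob (matrix_inv M) w"
      have wz: "w = mob M z" unfolding z_def by (simp add: mob_inv_r d)
      have "z \<in> cint a b" using w ne assms unfolding wz by (simp add: cint_tri tri_mob)
      then show "w \<in> mob M ` cint a b" using wz by blast
    qed
  qed
qed


lemma mob_conj: fixes D M :: "real^2^2" assumes "det D \<noteq> 0" "det M \<noteq> 0"
  shows "mob (D ** M ** matrix_inv D) z = mob D (mob M (mob (matrix_inv D) z))"
  using assms by (simp add: mob_mult det_mul det_minv)

lemma conj_back: fixes D M :: "real^2^2" assumes "det D \<noteq> 0"
  shows "matrix_inv D ** (D ** M ** matrix_inv D) ** D = M"
proof -
  have "matrix_inv D ** (D ** M ** matrix_inv D) ** D = (matrix_inv D ** D) ** M ** (matrix_inv D ** D)"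
    by (simp add: matrix_mul_assoc)
  then show ?thesis by (simp add: minv_l assms)
qed

lemma attr_conj: fixes D M :: "real^2^2" assumes "det D \<noteq> 0" "det M \<noteq> 0" "attr_pt M p"
  shows "attr_pt (D ** M ** matrix_inv D) (mob D p)"
proof -
  have tr: "trace (D ** M ** matrix_inv D) = trace M" by (rule trace_conj[OF assms(1)])
  from assms(3) consider (h) "trace M > 2" "\<exists>v l. v \<noteq> 0 \<and> l > 1 \<and> M *v v = l *\<^sub>R v \<and> p = proj_pt v"
    | (par) "trace M = 2" "M \<noteq> mat 1" "mob M p = p" unfolding attr_pt_def by blast
  then show ?thesis
  proof cases
    case h
    then obtain v l where v: "v \<noteq> 0" "l > 1" "M *v v = l *\<^sub>R v" "p = proj_pt v" by blast
    have "(D ** M ** matrix_inv D) *v (D *v v) = D *v (M *v ((matrix_inv D ** D) *v v))"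
      by (simp add: matrix_vector_mul_assoc matrix_mul_assoc)
    also have "\<dots> = l *\<^sub>R (D *v v)" using v assms by (simp add: minv_l matrix_vector_mult_scaleR)
    finally have e: "(D ** M ** matrix_inv D) *v (D *v v) = l *\<^sub>R (D *v v)" .
    have "mob D p = proj_pt (D *v v)" using v assms by (simp add: mob_proj)
    then show ?thesis unfolding attr_pt_def using tr h e v Mv_nz[OF assms(1) v(1)] by metis
  next
    case par
    have ne: "D ** M ** matrix_inv D \<noteq> mat 1"
    proof
      assume "D ** M ** matrix_inv D = mat 1"
      then have "M = matrix_inv D ** mat 1 ** D" using conj_back[OF assms(1), of M] by simp
      then show False using par assms by (simp add: minv_l)
    qed
    have "mob (D ** M ** matrix_inv D) (mob D p) = mob D p"
      using assms par by (simp add: mob_conj mob_inv_l)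
    then show ?thesis unfolding attr_pt_def using tr par ne by simp
  qed
qed

lemma minv_conj: fixes D M :: "real^2^2" assumes "det D \<noteq> 0" "det M \<noteq> 0"
  shows "matrix_inv (D ** M ** matrix_inv D) = D ** matrix_inv M ** matrix_inv D"
proof (rule inv_unique)
  have "D ** M ** matrix_inv D ** (D ** matrix_inv M ** matrix_inv D)
     = D ** M ** (matrix_inv D ** D) ** matrix_inv M ** matrix_inv D" by (simp add: matrix_mul_assoc)
  also have "\<dots> = D ** (M ** matrix_inv M) ** matrix_inv D" by (simp add: minv_l assms matrix_mul_assoc)
  also have "\<dots> = mat 1" by (simp add: minv_r assms)
  finally show "D ** M ** matrix_inv D ** (D ** matrix_inv M ** matrix_inv D) = mat 1" .
qed

lemma rep_conj: fixes D M :: "real^2^2" assumes "det D \<noteq> 0" "det M \<noteq> 0" "rep_pt M p"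
  shows "rep_pt (D ** M ** matrix_inv D) (mob D p)"
  using assms attr_conj[OF assms(1), of "matrix_inv M" p] unfolding rep_pt_def
  by (simp add: minv_conj det_minv)

lemma arc_conj: fixes D M :: "real^2^2" assumes "det D > 0" "det M \<noteq> 0" "a \<noteq> b"
    "mob M ` cint a b \<subseteq> cint a b"
  shows "mob (D ** M ** matrix_inv D) ` cint (mob D a) (mob D b) \<subseteq> cint (mob D a) (mob D b)"
proof -
  have d: "det D \<noteq> 0" using assms by simp
  have c: "cint (mob D a) (mob D b) = mob D ` cint a b" using cint_mob[OF assms(1,3)] by simp
  show ?thesis unfolding c
  proof
    fix w assume "w \<in> mob (D ** M ** matrix_inv D) ` mob D ` cint a b"
    then obtain z where z: "z \<in> cint a b" "w = mob (D ** M ** matrix_inv D) (mob D z)" by blast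
    have "w = mob D (mob M z)" using z d assms by (simp add: mob_conj mob_inv_l)
    then show "w \<in> mob D ` cint a b" using z assms(4) by blast
  qed
qed

lemma intdef_conj: fixes D M N :: "real^2^2" assumes "det D > 0" "det M \<noteq> 0" "det N \<noteq> 0"
    "interval_defined M N a b"
  shows "interval_defined (D ** M ** matrix_inv D) (D ** N ** matrix_inv D) (mob D a) (mob D b)"
proof (cases "a = b")
  case True then show ?thesis by (simp add: interval_defined_def)
next
  case False
  then show ?thesis using assms unfolding interval_defined_def
    by (metis arc_conj)
qed

lemma EIG: fixes M :: "real^2^2" assumes "det M = 1" "l^2 - trace M * l + 1 = 0"
  shows "\<exists>v. v \<noteq> 0 \<and> M *v v = l *\<^sub>R v"
proof -
  have ch: "(l - M$1$1) * (l - M$2$2) = M$1$2 * M$2$1"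
    using assms unfolding det2 trace2 by algebra
  consider (b) "M$1$2 \<noteq> 0" | (c) "M$1$2 = 0" "M$2$1 \<noteq> 0" | (a) "M$1$2 = 0" "M$2$1 = 0" "l = M$1$1"
    | (d) "M$1$2 = 0" "M$2$1 = 0" "l = M$2$2"
    using ch by force
  then show ?thesis
  proof cases
    case b
    show ?thesis
      by (rule exI[of _ "vec2 (M$1$2) (l - M$1$1)"]) (use b ch in \<open>simp add: vec2_eq mv_entry; algebra\<close>)
  next
    case c
    show ?thesis
      by (rule exI[of _ "vec2 (l - M$2$2) (M$2$1)"]) (use c ch in \<open>simp add: vec2_eq mv_entry; algebra\<close>)
  next
    case a
    show ?thesis
      by (rule exI[of _ "vec2 1 0"]) (use a in \<open>simp add: vec2_eq mv_entry\<close>)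
  next
    case d
    show ?thesis
      by (rule exI[of _ "vec2 0 1"]) (use d in \<open>simp add: vec2_eq mv_entry\<close>)
  qed
qed

lemma char: fixes M :: "real^2^2" assumes "det M = 1" "v \<noteq> 0" "M *v v = l *\<^sub>R v"
  shows "l^2 - trace M * l + 1 = 0"
proof -
  have e1: "M$1$1 * v$1 + M$1$2 * v$2 = l * v$1" and e2: "M$2$1 * v$1 + M$2$2 * v$2 = l * v$2"
    using assms(3) by (simp_all add: vec2_eq mv_entry)
  have dd: "M$1$1 * M$2$2 - M$1$2 * M$2$1 = 1" using assms(1) by (simp add: det2)
  have "(l^2 - trace M * l + 1) * v$1 = 0" using e1 e2 dd unfolding trace2 by algebra
  moreover have "(l^2 - trace M * l + 1) * v$2 = 0" using e1 e2 dd unfolding trace2 by algebra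
  ultimately show ?thesis using assms(2) by (auto simp: vec2_eq)
qed

lemma trace_I2: "trace (mat 1 :: real^2^2) = 2" by (simp add: trace2 mat1_entry)

lemma ATTR_EIG: fixes M :: "real^2^2" assumes "det M = 1" "attr_pt M p"
  shows "M \<noteq> mat 1 \<and> (\<exists>v l. v \<noteq> 0 \<and> l \<ge> 1 \<and> M *v v = l *\<^sub>R v \<and> p = proj_pt v \<and> l^2 - trace M * l + 1 = 0)"
proof -
  from assms(2) consider (h) "trace M > 2" "\<exists>v l. v \<noteq> 0 \<and> l > 1 \<and> M *v v = l *\<^sub>R v \<and> p = proj_pt v"
    | (par) "trace M = 2" "M \<noteq> mat 1" "mob M p = p" unfolding attr_pt_def by blast
  then show ?thesis
  proof cases
    case h
    then obtain v l where v: "v \<noteq> 0" "l > 1" "M *v v = l *\<^sub>R v" "p = proj_pt v" by blast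
    have "M \<noteq> mat 1" using h trace_I2 by auto
    then show ?thesis using v char[OF assms(1) v(1) v(3)] by (intro conjI exI[of _ v] exI[of _ l]) auto
  next
    case par
    have nz: "M *v lift p \<noteq> 0" using assms by (simp add: Mv_nz)
    have "proj_pt (M *v lift p) = proj_pt (lift p)" using par by (simp add: mob_lift)
    then obtain \<mu> where mu: "\<mu> \<noteq> 0" "M *v lift p = \<mu> *\<^sub>R lift p" using proj_eq[OF nz lift_nz] by blast
    have "\<mu>^2 - 2 * \<mu> + 1 = 0" using char[OF assms(1) lift_nz mu(2)] par by simp
    then have "(\<mu> - 1)^2 = 0" by (simp add: power2_eq_square algebra_simps)
    then have "\<mu> = 1" by simp
    then show ?thesis using par mu by (intro conjI exI[of _ "lift p"] exI[of _ 1]) auto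
  qed
qed

lemma EXIST: fixes M :: "real^2^2" assumes "det M = 1" "trace M \<ge> 2" "M \<noteq> mat 1"
  shows "\<exists>p. attr_pt M p"
proof (cases "trace M > 2")
  case True
  define t where "t = trace M"
  define s where "s = sqrt (t^2 - 4)"
  have t2: "t > 2" using True t_def by simp
  have "2*2 < t*t" using mult_strict_mono[of 2 t 2 t] t2 by simp
  then have tt: "t^2 - 4 \<ge> 0" by (simp add: power2_eq_square)
  have s2: "s^2 = t^2 - 4" "s \<ge> 0" unfolding s_def using tt by simp_all
  define l where "l = (t + s) / 2"
  have l1: "l > 1" unfolding l_def using t2 s2 by simp
  have "l^2 - t * l + 1 = 0" unfolding l_def using s2 by (simp add: power2_eq_square field_simps)
  then obtain v where v: "v \<noteq> 0" "M *v v = l *\<^sub>R v" using EIG[OF assms(1)] t_def by blast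
  show ?thesis unfolding attr_pt_def using True v l1 by blast
next
  case False
  then have t: "trace M = 2" using assms by simp
  obtain v where v: "v \<noteq> 0" "M *v v = 1 *\<^sub>R v" using EIG[OF assms(1), of 1] t by auto
  have "mob M (proj_pt v) = proj_pt v" using v assms by (simp add: mob_proj)
  then show ?thesis unfolding attr_pt_def using t assms by blast
qed


lemma eig_transfer: fixes M :: "real^2^2" assumes "u \<noteq> 0" "w \<noteq> 0" "proj_pt u = proj_pt w" "M *v w = l *\<^sub>R w"
  shows "M *v u = l *\<^sub>R u"
proof -
  obtain \<mu> where "\<mu> \<noteq> 0" "u = \<mu> *\<^sub>R w" using proj_eq[OF assms(1-3)] by blast
  then show ?thesis using assms(4) by (simp add: matrix_vector_mult_scaleR)
qed

lemma inv_eig: fixes A :: "real^2^2" assumes "det A \<noteq> 0" "matrix_inv A *v w = m *\<^sub>R w" "m \<noteq> 0"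
  shows "A *v w = (1/m) *\<^sub>R w"
proof -
  have "A *v (matrix_inv A *v w) = w" using assms(1) by (simp add: matrix_vector_mul_assoc minv_r)
  then have "m *\<^sub>R (A *v w) = w" using assms(2) by (simp add: matrix_vector_mult_scaleR)
  then show ?thesis using assms(3) by (metis scaleR_scaleR nonzero_divide_eq_eq scaleR_one mult.commute divide_inverse mult_1)
qed

lemma dt0_proj: assumes "u \<noteq> 0" "w \<noteq> 0" "dt u w = 0" shows "proj_pt u = proj_pt w"
proof (cases "u$2 = 0")
  case True
  then have "u$1 \<noteq> 0" using assms(1) by (simp add: vec2_eq)
  then have "w$2 = 0" using assms(3) True by (simp add: dt_def)
  then show ?thesis using True by (simp add: proj_pt_def)
next
  case False
  have "w$2 \<noteq> 0"
  proof
    assume w2: "w$2 = 0"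
    then have "w$1 = 0" using assms(3) False by (simp add: dt_def)
    then show False using w2 assms(2) by (simp add: vec2_eq)
  qed
  then show ?thesis using False assms(3) by (simp add: proj_pt_def dt_def field_simps)
qed

lemma orth_dt: fixes x1 x2 y1 y2 v1 v2 :: real
  assumes "x1 * v1 + x2 * v2 = 0" "y1 * v1 + y2 * v2 = 0" "v1 \<noteq> 0 \<or> v2 \<noteq> 0"
  shows "x1 * y2 - x2 * y1 = 0"
proof -
  have "v1 * (x1 * y2 - x2 * y1) = 0" using assms(1,2) by algebra
  moreover have "v2 * (x1 * y2 - x2 * y1) = 0" using assms(1,2) by algebra
  ultimately show ?thesis using assms(3) by auto
qed

lemma commute2: fixes A B :: "real^2^2"
  assumes "A *v u = al *\<^sub>R u" "A *v w = be *\<^sub>R w" "B *v u = ga *\<^sub>R u" "B *v w = ep *\<^sub>R w" "dt u w \<noteq> 0"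
  shows "A ** B = B ** A"
proof -
  define P where "P = mk (u$1) (w$1) (u$2) (w$2)"
  have dP: "det P \<noteq> 0" using assms(5) by (simp add: P_def det2 dt_def algebra_simps)
  have AP: "A ** P = P ** mk al 0 0 be" using assms(1,2) by (simp add: P_def mat2_eq mm_entry vec2_eq mv_entry mult.commute)
  have BP: "B ** P = P ** mk ga 0 0 ep" using assms(3,4) by (simp add: P_def mat2_eq mm_entry vec2_eq mv_entry mult.commute)
  have dg: "mk al 0 0 be ** mk ga 0 0 ep = mk ga 0 0 ep ** mk al 0 0 be" by (simp add: mat2_eq mm_entry mult.commute)
  have "A ** B ** P = B ** A ** P"
  proof -
    have "A ** B ** P = (A ** P) ** mk ga 0 0 ep" by (simp add: matrix_mul_assoc[symmetric] BP)
    also have "\<dots> = P ** (mk al 0 0 be ** mk ga 0 0 ep)" by (simp add: AP matrix_mul_assoc)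
    also have "\<dots> = (P ** mk ga 0 0 ep) ** mk al 0 0 be" by (simp add: dg matrix_mul_assoc)
    also have "\<dots> = (B ** P) ** mk al 0 0 be" by (simp add: BP)
    also have "\<dots> = B ** (A ** P)" by (simp add: AP matrix_mul_assoc)
    also have "\<dots> = B ** A ** P" by (simp add: matrix_mul_assoc)
    finally show ?thesis .
  qed
  then have "A ** B ** P ** matrix_inv P = B ** A ** P ** matrix_inv P" by simp
  then show ?thesis by (simp add: matrix_mul_assoc[symmetric] minv_r dP)
qed

lemma parab_commute: fixes A B :: "real^2^2"
  assumes "det A = 1" "det B = 1" "trace A = 2" "trace B = 2" "v \<noteq> 0" "A *v v = v" "B *v v = v"
  shows "A ** B = B ** A"
proof -
  have nz: "v$1 \<noteq> 0 \<or> v$2 \<noteq> 0" using assms(5) by (simp add: vec2_eq)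
  have r1: "(A$1$1 - 1) * v$1 + A$1$2 * v$2 = 0" and r2: "A$2$1 * v$1 + (A$2$2 - 1) * v$2 = 0"
    using assms(6) by (simp_all add: vec2_eq mv_entry algebra_simps)
  have r3: "(B$1$1 - 1) * v$1 + B$1$2 * v$2 = 0" and r4: "B$2$1 * v$1 + (B$2$2 - 1) * v$2 = 0"
    using assms(7) by (simp_all add: vec2_eq mv_entry algebra_simps)
  have t1: "A$1$1 + A$2$2 = 2" and t2: "B$1$1 + B$2$2 = 2" using assms(3,4) by (simp_all add: trace2)
  have o14: "(A$1$1 - 1) * (B$2$2 - 1) - A$1$2 * B$2$1 = 0" by (rule orth_dt[OF r1 r4 nz])
  have o32: "(B$1$1 - 1) * (A$2$2 - 1) - B$1$2 * A$2$1 = 0" by (rule orth_dt[OF r3 r2 nz])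
  have o13: "(A$1$1 - 1) * B$1$2 - A$1$2 * (B$1$1 - 1) = 0" by (rule orth_dt[OF r1 r3 nz])
  have o24: "A$2$1 * (B$2$2 - 1) - (A$2$2 - 1) * B$2$1 = 0" by (rule orth_dt[OF r2 r4 nz])
  have e11: "A$1$2 * B$2$1 = B$1$2 * A$2$1" using o14 o32 t1 t2 by algebra
  have e12: "A$1$1 * B$1$2 + A$1$2 * B$2$2 = B$1$1 * A$1$2 + B$1$2 * A$2$2" using o13 t1 t2 by algebra
  have e21: "A$2$1 * B$1$1 + A$2$2 * B$2$1 = B$2$1 * A$1$1 + B$2$2 * A$2$1" using o24 t1 t2 by algebra
  show ?thesis using e11 e12 e21 by (simp add: mat2_eq mm_entry algebra_simps)
qed

lemma COMMON: fixes A B :: "real^2^2"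
  assumes "det A = 1" "det B = 1" "attr_pt A p" "attr_pt B p" "rep_pt A q" "rep_pt B q"
  shows "A ** B = B ** A"
proof -
  have dAi: "det (matrix_inv A) = 1" and dBi: "det (matrix_inv B) = 1" using assms by (simp_all add: det_minv)
  obtain vA lA where vA: "vA \<noteq> 0" "lA \<ge> 1" "A *v vA = lA *\<^sub>R vA" "p = proj_pt vA" "lA^2 - trace A * lA + 1 = 0"
    using ATTR_EIG[OF assms(1,3)] by blast
  obtain vB lB where vB: "vB \<noteq> 0" "lB \<ge> 1" "B *v vB = lB *\<^sub>R vB" "p = proj_pt vB" "lB^2 - trace B * lB + 1 = 0"
    using ATTR_EIG[OF assms(2,4)] by blast
  obtain wA mA where wA: "wA \<noteq> 0" "mA \<ge> 1" "matrix_inv A *v wA = mA *\<^sub>R wA" "q = proj_pt wA"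
    using ATTR_EIG[OF dAi] assms(5) unfolding rep_pt_def by blast
  obtain wB mB where wB: "wB \<noteq> 0" "mB \<ge> 1" "matrix_inv B *v wB = mB *\<^sub>R wB" "q = proj_pt wB"
    using ATTR_EIG[OF dBi] assms(6) unfolding rep_pt_def by blast
  have BvA: "B *v vA = lB *\<^sub>R vA" using eig_transfer[OF vA(1) vB(1) _ vB(3)] vA(4) vB(4) by simp
  have AwA: "A *v wA = (1/mA) *\<^sub>R wA" using inv_eig[of A wA mA] wA assms(1) by simp
  have BwB: "B *v wB = (1/mB) *\<^sub>R wB" using inv_eig[of B wB mB] wB assms(2) by simp
  have BwA: "B *v wA = (1/mB) *\<^sub>R wA" using eig_transfer[OF wA(1) wB(1) _ BwB] wA(4) wB(4) by simp
  show ?thesis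
  proof (cases "dt vA wA = 0")
    case False
    then show ?thesis using commute2[OF vA(3) AwA BvA BwA] by simp
  next
    case True
    have pr: "proj_pt wA = proj_pt vA" using dt0_proj[OF vA(1) wA(1) True] by simp
    have "A *v wA = lA *\<^sub>R wA" using eig_transfer[OF wA(1) vA(1) pr vA(3)] .
    then have "lA *\<^sub>R wA = (1/mA) *\<^sub>R wA" using AwA by metis
    then have "lA = 1/mA" using wA(1) by (metis scaleR_cancel_right)
    then have lA1: "lA = 1" using vA(2) wA(2) by (smt (verit) divide_le_eq_1)
    have "B *v wA = lB *\<^sub>R wA" using eig_transfer[OF wA(1) vA(1) pr BvA] .
    then have "lB *\<^sub>R wA = (1/mB) *\<^sub>R wA" using BwA by metis
    then have "lB = 1/mB" using wA(1) by (metis scaleR_cancel_right)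
    then have lB1: "lB = 1" using vB(2) wB(2) by (smt (verit) divide_le_eq_1)
    have tA: "trace A = 2" using vA(5) lA1 by simp
    have tB: "trace B = 2" using vB(5) lB1 by simp
    show ?thesis using parab_commute[OF assms(1,2) tA tB vA(1)] vA(3) BvA lA1 lB1 by simp
  qed
qed


(* nonnegativity from an invariant arc *)
lemma test_pt: fixes a b c d t x :: real assumes "c \<noteq> 0" "a*d - b*c = 1" "x = (t - d)/c"
  shows "c*x + d = t \<and> a*x + b = (a*t - 1)/c"
proof -
  have cx: "c*x = t - d" using assms(1,3) by simp
  have "a*x + b = (a*(c*x) + b*c)/c" using assms(1) by (simp add: field_simps)
  also have "a*(c*x) + b*c = a*t - (a*d - b*c)" by (subst cx) (simp add: algebra_simps)
  then have "(a*(c*x) + b*c)/c = (a*t - 1)/c" using assms(2) by simp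
  ultimately have "a*x + b = (a*t - 1)/c" by simp
  then show ?thesis using cx by simp
qed

lemma NN_real: fixes a b c d :: real
  assumes det: "a*d - b*c = 1" and tr: "a + d > 0"
    and Finf: "c \<noteq> 0 \<Longrightarrow> 0 \<le> a/c" and F0: "d \<noteq> 0 \<Longrightarrow> 0 \<le> b/d"
    and Fx: "\<And>x. 0 \<le> x \<Longrightarrow> c*x + d \<noteq> 0 \<Longrightarrow> 0 \<le> (a*x+b)/(c*x+d)"
  shows "0 \<le> a \<and> 0 \<le> b \<and> 0 \<le> c \<and> 0 \<le> d"
proof -
  have a: "0 \<le> a"
  proof (rule ccontr)
    assume "\<not> 0 \<le> a"
    then have a: "a < 0" by simp
    then have d: "d > 0" using tr by simp
    have c0: "c \<noteq> 0"
    proof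
      assume "c = 0" then have "a*d = 1" using det by simp
      moreover have "a*d < 0" using a d by (simp add: mult_neg_pos)
      ultimately show False by simp
    qed
    have c: "c < 0" using Finf[OF c0] a c0 by (smt (verit) divide_neg_pos)
    define x where "x = (1/(2*a) - d)/c"
    have tp: "c*x + d = 1/(2*a) \<and> a*x + b = (a*(1/(2*a)) - 1)/c" using test_pt[OF c0 det x_def] .
    have "1/(2*a) < 0" using a by simp
    then have "1/(2*a) - d \<le> 0" using d by linarith
    then have x0: "0 \<le> x" unfolding x_def using c by (intro divide_nonpos_neg) simp_all
    have n: "a*x + b > 0" using tp a c by (simp add: divide_neg_neg)
    have dd: "c*x + d < 0" using tp a by (simp add: divide_pos_neg)
    have "(a*x+b)/(c*x+d) < 0" using n dd by (simp add: divide_pos_neg)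
    then show False using Fx[OF x0] dd by fastforce
  qed
  have d: "0 \<le> d"
  proof (rule ccontr)
    assume "\<not> 0 \<le> d"
    then have d: "d < 0" by simp
    then have a: "a > 0" using tr by simp
    have c0: "c \<noteq> 0"
    proof
      assume "c = 0" then have "a*d = 1" using det by simp
      moreover have "a*d < 0" using a d by (simp add: mult_pos_neg)
      ultimately show False by simp
    qed
    have c: "c > 0" using Finf[OF c0] a c0 by (smt (verit) divide_pos_neg)
    define x where "x = (1/(2*a) - d)/c"
    have tp: "c*x + d = 1/(2*a) \<and> a*x + b = (a*(1/(2*a)) - 1)/c" using test_pt[OF c0 det x_def] .
    have "1/(2*a) > 0" using a by simp
    then have "1/(2*a) - d \<ge> 0" using d by linarith
    then have x0: "0 \<le> x" unfolding x_def using c by (intro divide_nonneg_pos) simp_all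
    have n: "a*x + b < 0" using tp a c by (simp add: divide_neg_pos)
    have dd: "c*x + d > 0" using tp a by simp
    have "(a*x+b)/(c*x+d) < 0" using n dd by (simp add: divide_neg_pos)
    then show False using Fx[OF x0] dd by fastforce
  qed
  have c: "0 \<le> c"
  proof (rule ccontr)
    assume "\<not> 0 \<le> c"
    then have c: "c < 0" by simp
    then have c0: "c \<noteq> 0" by simp
    have "a = 0" using Finf[OF c0] a c by (smt (verit) divide_pos_neg)
    then have a0: "a = 0" .
    then have dp: "d > 0" using tr by simp
    define x where "x = (-1 - d)/c"
    have tp: "c*x + d = -1 \<and> a*x + b = (a*(-1) - 1)/c" using test_pt[OF c0 det x_def] .
    have x0: "0 \<le> x" unfolding x_def using c dp by (intro divide_nonpos_neg) simp_all
    have n: "a*x + b > 0" using tp a0 c by (simp add: divide_neg_neg)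
    have "(a*x+b)/(c*x+d) < 0" using n tp by (simp add: divide_pos_neg)
    then show False using Fx[OF x0] tp by fastforce
  qed
  have b: "0 \<le> b"
  proof (rule ccontr)
    assume "\<not> 0 \<le> b"
    then have b: "b < 0" by simp
    show False
    proof (cases "d = 0")
      case False
      then have "d > 0" using d by simp
      then have "b/d < 0" using b by (simp add: divide_neg_pos)
      then show False using F0 False by fastforce
    next
      case True
      then have bc: "b*c = -1" using det by simp
      then have c0: "c \<noteq> 0" by auto
      then have cp: "c > 0" using c by simp
      have ap: "a > 0" using tr True by simp
      define x where "x = (1/(2*a) - d)/c"
      have tp: "c*x + d = 1/(2*a) \<and> a*x + b = (a*(1/(2*a)) - 1)/c" using test_pt[OF c0 det x_def] .
      have x0: "0 \<le> x" unfolding x_def using ap cp True by (intro divide_nonneg_pos) simp_all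
      have n: "a*x + b < 0" using tp ap cp by (simp add: divide_neg_pos)
      have dd: "c*x + d > 0" using tp ap by simp
      have "(a*x+b)/(c*x+d) < 0" using n dd by (simp add: divide_neg_pos)
      then show False using Fx[OF x0] dd by fastforce
    qed
  qed
  show ?thesis using a b c d by simp
qed

lemma cint_0inf: "cint (Some 0) None = {z. le_ext (Some 0) z}"
  by (simp add: cint_def)

lemma NONNEG: fixes M :: "real^2^2"
  assumes "det M = 1" "trace M > 0" "mob M ` cint (Some 0) None \<subseteq> cint (Some 0) None"
  shows "\<forall>i j. 0 \<le> M$i$j"
proof -
  have inv: "\<And>z. le_ext (Some 0) z \<Longrightarrow> le_ext (Some 0) (mob M z)" using assms(3) unfolding cint_0inf by blast
  have Finf: "M$2$1 \<noteq> 0 \<Longrightarrow> 0 \<le> M$1$1 / M$2$1" using inv[of None] by (simp add: mob_def)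
  have F0: "M$2$2 \<noteq> 0 \<Longrightarrow> 0 \<le> M$1$2 / M$2$2" using inv[of "Some 0"] by (simp add: mob_def)
  have Fx: "0 \<le> (M$1$1*x + M$1$2)/(M$2$1*x + M$2$2)" if "0 \<le> x" "M$2$1*x + M$2$2 \<noteq> 0" for x
  proof -
    have "le_ext (Some 0) (mob M (Some x))" using inv that by simp
    then show ?thesis using that by (simp add: mob_def)
  qed
  have "0 \<le> M$1$1 \<and> 0 \<le> M$1$2 \<and> 0 \<le> M$2$1 \<and> 0 \<le> M$2$2"
    by (rule NN_real[OF _ _ Finf F0 Fx]) (use assms(1,2) in \<open>simp_all add: det2 trace2\<close>)
  then show ?thesis by (simp add: forall_2)
qed

lemma dt_lift0: "dt (lift p) (lift q) = 0 \<Longrightarrow> p = q"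
  by (cases p; cases q) simp_all

lemma INV: fixes A B :: "real^2^2"
  assumes dA: "det A = 1" and dB: "det B = 1" and tA: "trace A > 0" and tB: "trace B > 0" and xy: "x \<noteq> y"
    and iA: "mob A ` cint x y \<subseteq> cint x y" and iB: "mob B ` cint x y \<subseteq> cint x y"
  shows "\<exists>C :: real^2^2. det C = 1 \<and> (\<forall>i j. 0 \<le> (C ** A ** matrix_inv C) $ i $ j) \<and>
       (\<forall>i j. 0 \<le> (C ** B ** matrix_inv C) $ i $ j)"
proof -
  define s where "s = 1 / dt (lift y) (lift x)"
  have dne: "dt (lift y) (lift x) \<noteq> 0" using dt_lift0 xy by metis
  define D where "D = mk (s * lift y $ 1) (lift x $ 1) (s * lift y $ 2) (lift x $ 2)"
  have "det D = s * dt (lift y) (lift x)" by (simp add: D_def det2 dt_def algebra_simps)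
  then have dD: "det D = 1" using dne by (simp add: s_def)
  have "D *v lift None = s *\<^sub>R lift y" by (simp add: D_def vec2_eq mv_entry)
  then have Dinf: "mob D None = y" using dne by (simp add: mob_lift proj_scale s_def)
  have "D *v lift (Some 0) = lift x" by (simp add: D_def vec2_eq mv_entry)
  then have D0: "mob D (Some 0) = x" by (simp add: mob_lift)
  define C where "C = matrix_inv D"
  have dC: "det C = 1" using dD by (simp add: C_def det_minv)
  have Cx: "mob C x = Some 0" and Cy: "mob C y = None" unfolding C_def using D0 Dinf dD by (auto simp: mob_inv_l)
  have pos: "det C > 0" using dC by simp
  have aA: "mob (C ** A ** matrix_inv C) ` cint (Some 0) None \<subseteq> cint (Some 0) None"
    using arc_conj[OF pos _ xy iA] dA Cx Cy by simp
  have aB: "mob (C ** B ** matrix_inv C) ` cint (Some 0) None \<subseteq> cint (Some 0) None"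
    using arc_conj[OF pos _ xy iB] dB Cx Cy by simp
  have nA: "\<forall>i j. 0 \<le> (C ** A ** matrix_inv C) $ i $ j"
    by (rule NONNEG[OF _ _ aA]) (simp_all add: det_conj trace_conj dC dA tA)
  have nB: "\<forall>i j. 0 \<le> (C ** B ** matrix_inv C) $ i $ j"
    by (rule NONNEG[OF _ _ aB]) (simp_all add: det_conj trace_conj dC dB tB)
  show ?thesis using dC nA nB by blast
qed

definition Rm :: "real^2^2" where "Rm = mk 0 1 (-1) 0"

lemma det_Rm: "det Rm = 1" by (simp add: Rm_def det2)

lemma inv_Rm: "matrix_inv Rm = mk 0 (-1) 1 0"
  by (simp add: inv_det1 det_Rm) (simp add: Rm_def)

lemma Rm_transpose: fixes P :: "real^2^2" assumes "det P = 1"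
  shows "Rm ** matrix_inv P ** matrix_inv Rm = transpose P"
  unfolding inv_Rm using assms by (simp add: inv_det1 mat2_eq mm_entry transpose_def Rm_def)

lemma conj_conj: fixes D E M :: "real^2^2" assumes "det D \<noteq> 0" "det E \<noteq> 0"
  shows "D ** (E ** M ** matrix_inv E) ** matrix_inv D = (D ** E) ** M ** matrix_inv (D ** E)"
  using assms by (simp add: minv_mult matrix_mul_assoc)

lemma minv_I: "matrix_inv (mat 1 :: real^2^2) = mat 1" by (rule inv_unique) simp

lemma COMPL: fixes A C :: "real^2^2"
  assumes dC: "det C = 1" and dA: "det A = 1"
    and n: "\<forall>i j. 0 \<le> (C ** matrix_inv A ** matrix_inv C) $ i $ j"
  shows "det (Rm ** C) = 1 \<and> (\<forall>i j. 0 \<le> ((Rm ** C) ** A ** matrix_inv (Rm ** C)) $ i $ j)"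
proof -
  define P where "P = C ** matrix_inv A ** matrix_inv C"
  have dP: "det P = 1" using dC dA by (simp add: P_def det_conj det_minv)
  have iP: "matrix_inv P = C ** A ** matrix_inv C" using dC dA
    by (simp add: P_def minv_conj det_minv minv_minv)
  have "(Rm ** C) ** A ** matrix_inv (Rm ** C) = Rm ** matrix_inv P ** matrix_inv Rm"
    unfolding iP by (rule conj_conj[symmetric]) (simp_all add: det_Rm dC)
  also have "\<dots> = transpose P" by (rule Rm_transpose[OF dP])
  finally have e: "(Rm ** C) ** A ** matrix_inv (Rm ** C) = transpose P" .
  show ?thesis using n unfolding e P_def by (simp add: det_mul det_Rm dC transpose_def)
qed


(* dynamics of nonnegative matrices *)
lemma le_ext_refl[simp]: "le_ext p p" by (cases p) simp_all
lemma le_ext_trans: "le_ext p q \<Longrightarrow> le_ext q r \<Longrightarrow> le_ext p r"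
  by (cases p; cases q; cases r) simp_all
lemma le_ext_total: "le_ext p q \<or> le_ext q p"
  by (cases p; cases q) auto

lemma frac_le: fixes u w p q :: real assumes "0 < p" "0 < q" "u*q \<le> w*p" shows "u/p \<le> w/q"
  using assms by (simp add: field_simps)

lemma NN_ATTR: fixes a b c d :: real
  assumes nn: "0 \<le> a" "0 \<le> b" "0 \<le> c" "0 \<le> d" and dt1: "a*d - b*c = 1" and at: "attr_pt (mk a b c d) p"
  shows "le_ext (Some 0) p \<and> mob (mk a b c d) p = p
    \<and> (\<forall>z. le_ext (Some 0) z \<longrightarrow> le_ext z p \<longrightarrow> le_ext z (mob (mk a b c d) z))
    \<and> (\<forall>z. le_ext p z \<longrightarrow> le_ext (mob (mk a b c d) z) z)"
proof -
  have dM: "det (mk a b c d) = 1" using dt1 by (simp add: det2)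
  obtain v l where v: "v \<noteq> 0" "l \<ge> 1" "mk a b c d *v v = l *\<^sub>R v" "p = proj_pt v"
      "l^2 - trace (mk a b c d) * l + 1 = 0" and ne: "mk a b c d \<noteq> mat 1"
    using ATTR_EIG[OF dM at] by blast
  have ch: "l^2 - (a+d)*l + 1 = 0" using v(5) by (simp add: trace2)
  have e1: "a * v$1 + b * v$2 = l * v$1" and e2: "c * v$1 + d * v$2 = l * v$2"
    using v(3) by (simp_all add: vec2_eq mv_entry)
  have ad: "a*d \<ge> 1" using dt1 nn by (smt (verit) mult_nonneg_nonneg)
  have ap: "a > 0" using ad nn by (cases "a = 0") auto
  have dp: "d > 0" using ad nn by (cases "d = 0") auto
  have prod: "(l - a)*(l - d) = b*c" using ch dt1 by algebra
  have ll: "1*1 \<le> l*l" using v(2) by (intro mult_mono) simp_all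
  have "(a+d)*l \<le> (2*l)*l" using ch ll by (simp add: power2_eq_square algebra_simps)
  then have sum: "a + d \<le> 2*l" using v(2) by simp
  have bc0: "b*c \<ge> 0" using nn by simp
  have la: "l \<ge> a"
  proof (rule ccontr)
    assume "\<not> l \<ge> a"
    then have "l - a < 0" by simp
    moreover have "l - d \<le> 0"
    proof (rule ccontr)
      assume "\<not> l - d \<le> 0"
      then have "(l - a)*(l - d) < 0" using \<open>\<not> l \<ge> a\<close> by (simp add: mult_neg_pos)
      then show False using prod bc0 by simp
    qed
    ultimately show False using sum by simp
  qed
  have ld: "l \<ge> d"
  proof (rule ccontr)
    assume "\<not> l \<ge> d"
    then have "l - d < 0" by simp
    moreover have "l - a \<le> 0"
    proof (rule ccontr)
      assume "\<not> l - a \<le> 0"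
      then have "(l - a)*(l - d) < 0" using \<open>\<not> l \<ge> d\<close> by (simp add: mult_pos_neg)
      then show False using prod bc0 by simp
    qed
    ultimately show False using sum by simp
  qed
  have den: "c*x + d > 0" if "x \<ge> 0" for x using that nn dp by (smt (verit) mult_nonneg_nonneg)
  have mobS: "mob (mk a b c d) (Some x) = Some ((a*x+b)/(c*x+d))" if "x \<ge> 0" for x
    using den[OF that] by (simp add: mob_def)
  show ?thesis
  proof (cases "v$2 = 0")
    case True
    then have v1: "v$1 \<noteq> 0" using v(1) by (simp add: vec2_eq)
    have c0: "c = 0" using e2 True v1 by simp
    have al: "a = l" using e1 True v1 by simp
    have pN: "p = None" using v(4) True by (simp add: proj_pt_def)
    have mN: "mob (mk a b c d) None = None" using c0 by (simp add: mob_def)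
    have iii: "le_ext z (mob (mk a b c d) z)" if "le_ext (Some 0) z" for z
    proof (cases z)
      case None then show ?thesis using mN by simp
    next
      case (Some x)
      then have x0: "x \<ge> 0" using that by simp
      have "x*d \<le> a*x + b" using x0 ld al nn by (smt (verit) mult_left_mono mult.commute)
      then have "x \<le> (a*x+b)/(c*x+d)" using c0 dp by (simp add: le_divide_eq)
      then show ?thesis using Some mobS[OF x0] by simp
    qed
    have iv: "le_ext (mob (mk a b c d) z) z" if "le_ext None z" for z
      using that mN by (cases z) simp_all
    show ?thesis using pN mN iii iv by simp
  next
    case False
    define \<pi> where "\<pi> = v$1 / v$2"
    have pS: "p = Some \<pi>" using v(4) False by (simp add: proj_pt_def \<pi>_def)
    have f1: "a*\<pi> + b = l*\<pi>" using e1 False unfolding \<pi>_def by (simp add: field_simps)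
    have f2: "c*\<pi> + d = l" using e2 False unfolding \<pi>_def by (simp add: field_simps)
    have pi0: "\<pi> \<ge> 0"
    proof (cases "c = 0")
      case False
      then have "c > 0" using nn by simp
      moreover have "c*\<pi> \<ge> 0" using f2 ld by simp
      ultimately show ?thesis by (simp add: zero_le_mult_iff)
    next
      case True
      then have ldd: "l = d" using f2 by simp
      then have dab: "(d - a)*\<pi> = b" using f1 by (simp add: algebra_simps)
      show ?thesis
      proof (cases "d = a")
        case True
        then have "b = 0" using dab by simp
        then have "a*a = 1" using dt1 True by simp
        then have "a = 1" using ap by (smt (verit) mult_le_cancel_left1 mult_less_cancel_left1)
        then have "mk a b c d = mat 1" using True \<open>b = 0\<close> \<open>c = 0\<close> by (simp add: mat2_eq mat1_entry)
        then show ?thesis using ne by simp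
      next
        case False
        then have "d - a > 0" using la ldd by simp
        then show ?thesis using dab nn by (smt (verit) zero_le_mult_iff)
      qed
    qed
    have lpos: "l > 0" using v(2) by simp
    have fixp: "mob (mk a b c d) (Some \<pi>) = Some \<pi>" using mobS[OF pi0] f1 f2 lpos by simp
    have qid: "x*(c*x+d) - (a*x+b) = (x - \<pi>)*(c*x + (l - a))" for x
      using f1 f2 by algebra
    have g0: "c*x + (l - a) \<ge> 0" if "x \<ge> 0" for x using that nn la by (smt (verit) mult_nonneg_nonneg)
    have iii: "le_ext z (mob (mk a b c d) z)" if "le_ext (Some 0) z" "le_ext z (Some \<pi>)" for z
    proof (cases z)
      case None then show ?thesis using that by simp
    next
      case (Some x)
      then have x0: "x \<ge> 0" and xp: "x \<le> \<pi>" using that by simp_all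
      have "(x - \<pi>)*(c*x + (l - a)) \<le> 0" using xp g0[OF x0] by (simp add: mult_nonpos_nonneg)
      then have "x*(c*x+d) \<le> a*x+b" using qid[of x] by simp
      then have "x \<le> (a*x+b)/(c*x+d)" using den[OF x0] by (simp add: le_divide_eq)
      then show ?thesis using Some mobS[OF x0] by simp
    qed
    have iv: "le_ext (mob (mk a b c d) z) z" if "le_ext (Some \<pi>) z" for z
    proof (cases z)
      case None then show ?thesis by simp
    next
      case (Some x)
      then have xp: "\<pi> \<le> x" using that by simp
      then have x0: "x \<ge> 0" using pi0 by simp
      have "(x - \<pi>)*(c*x + (l - a)) \<ge> 0" using xp g0[OF x0] by simp
      then have "a*x+b \<le> x*(c*x+d)" using qid[of x] by simp
      then have "(a*x+b)/(c*x+d) \<le> x" using den[OF x0] by (simp add: divide_le_eq)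
      then show ?thesis using Some mobS[OF x0] by simp
    qed
    show ?thesis using pS pi0 fixp iii iv by simp
  qed
qed

lemma NN_MONO: fixes a b c d :: real
  assumes nn: "0 \<le> a" "0 \<le> b" "0 \<le> c" "0 \<le> d" and dt1: "a*d - b*c = 1"
    and z0: "le_ext (Some 0) z" and zw: "le_ext z w"
  shows "le_ext (mob (mk a b c d) z) (mob (mk a b c d) w) \<and> le_ext (Some 0) (mob (mk a b c d) z)"
proof -
  have ad: "a*d \<ge> 1" using dt1 nn by (smt (verit) mult_nonneg_nonneg)
  have dp: "d > 0" using ad nn by (cases "d = 0") auto
  have den: "c*x + d > 0" if "x \<ge> 0" for x using that nn dp by (smt (verit) mult_nonneg_nonneg)
  have mobS: "mob (mk a b c d) (Some x) = Some ((a*x+b)/(c*x+d))" if "x \<ge> 0" for x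
    using den[OF that] by (simp add: mob_def)
  show ?thesis
  proof (cases z)
    case None
    then have "w = None" using zw by (cases w) simp_all
    then show ?thesis using None nn by (simp add: mob_def)
  next
    case (Some x)
    note zS = Some
    then have x0: "x \<ge> 0" using z0 by simp
    have pos: "0 \<le> (a*x+b)/(c*x+d)" using den[OF x0] nn x0 by simp
    show ?thesis
    proof (cases w)
      case None
      show ?thesis
      proof (cases "c = 0")
        case True then show ?thesis using None zS mobS[OF x0] pos by (simp add: mob_def)
      next
        case False
        then have cp: "c > 0" using nn by simp
        have "(a*x+b)*c \<le> a*(c*x+d)" using dt1 by (simp add: algebra_simps)
        then have "(a*x+b)/(c*x+d) \<le> a/c" using frac_le[OF den[OF x0] cp] by simp
        then show ?thesis using None zS mobS[OF x0] pos False by (simp add: mob_def)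
      qed
    next
      case (Some y)
      then have xy: "x \<le> y" using zw zS by simp
      then have y0: "y \<ge> 0" using x0 by simp
      have "(a*y+b)*(c*x+d) - (a*x+b)*(c*y+d) = (a*d - b*c)*(y - x)" by algebra
      then have "(a*x+b)*(c*y+d) \<le> (a*y+b)*(c*x+d)" using dt1 xy by simp
      then have "(a*x+b)/(c*x+d) \<le> (a*y+b)/(c*y+d)" using frac_le[OF den[OF x0] den[OF y0]] by simp
      then show ?thesis using Some zS mobS[OF x0] mobS[OF y0] pos by simp
    qed
  qed
qed

lemma mk_eta: "(M::real^2^2) = mk (M$1$1) (M$1$2) (M$2$1) (M$2$2)" by (simp add: mat2_eq)

lemma NN_ATTR': fixes M :: "real^2^2" assumes "\<forall>i j. 0 \<le> M$i$j" "det M = 1" "attr_pt M p"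
  shows "le_ext (Some 0) p \<and> mob M p = p
    \<and> (\<forall>z. le_ext (Some 0) z \<longrightarrow> le_ext z p \<longrightarrow> le_ext z (mob M z))
    \<and> (\<forall>z. le_ext p z \<longrightarrow> le_ext (mob M z) z)"
proof -
  have "attr_pt (mk (M$1$1) (M$1$2) (M$2$1) (M$2$2)) p" using assms(3) mk_eta[of M] by simp
  then show ?thesis using NN_ATTR[of "M$1$1" "M$1$2" "M$2$1" "M$2$2" p] assms(1,2) mk_eta[of M]
    by (simp add: det2)
qed

lemma NN_MONO': fixes M :: "real^2^2" assumes "\<forall>i j. 0 \<le> M$i$j" "det M = 1"
    "le_ext (Some 0) z" "le_ext z w"
  shows "le_ext (mob M z) (mob M w) \<and> le_ext (Some 0) (mob M z)"
  using NN_MONO[of "M$1$1" "M$1$2" "M$2$1" "M$2$2" z w] assms mk_eta[of M] by (simp add: det2)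

lemma NN_ARC: fixes A B :: "real^2^2"
  assumes nA: "\<forall>i j. 0 \<le> A$i$j" and nB: "\<forall>i j. 0 \<le> B$i$j" and dA: "det A = 1" and dB: "det B = 1"
    and aA: "attr_pt A ap" and aB: "attr_pt B bp" and le: "le_ext ap bp"
  shows "mob A ` cint ap bp \<subseteq> cint ap bp \<and> mob B ` cint ap bp \<subseteq> cint ap bp"
proof -
  have c: "cint ap bp = {z. le_ext ap z \<and> le_ext z bp}" using le by (simp add: cint_def)
  note A = NN_ATTR'[OF nA dA aA] and B = NN_ATTR'[OF nB dB aB]
  have "le_ext ap (mob A z) \<and> le_ext (mob A z) bp \<and> le_ext ap (mob B z) \<and> le_ext (mob B z) bp"
    if z: "le_ext ap z" "le_ext z bp" for z
  proof -
    have z0: "le_ext (Some 0) z" using A z le_ext_trans by blast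
    have b0: "le_ext (Some 0) bp" using z0 z le_ext_trans by blast
    have 1: "le_ext ap (mob A z)" using NN_MONO'[OF nA dA _ z(1)] A by simp
    have 2: "le_ext (mob A z) bp" using A z le_ext_trans by blast
    have 3: "le_ext (mob B z) bp" using NN_MONO'[OF nB dB z0 z(2)] B by simp
    have 4: "le_ext ap (mob B z)" using B z z0 le_ext_trans by blast
    show ?thesis using 1 2 3 4 by simp
  qed
  then show ?thesis unfolding c by blast
qed

lemma NN_COH: fixes A B :: "real^2^2"
  assumes nA: "\<forall>i j. 0 \<le> A$i$j" and nB: "\<forall>i j. 0 \<le> B$i$j" and dA: "det A = 1" and dB: "det B = 1"
    and tA: "trace A \<ge> 2" and tB: "trace B \<ge> 2" and iA: "A \<noteq> mat 1" and iB: "B \<noteq> mat 1"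
  shows "\<exists>ap bp. attr_pt A ap \<and> attr_pt B bp \<and> interval_defined A B ap bp"
proof -
  obtain ap where ap: "attr_pt A ap" using EXIST[OF dA tA iA] by blast
  obtain bp where bp: "attr_pt B bp" using EXIST[OF dB tB iB] by blast
  have "interval_defined A B ap bp"
  proof (cases "le_ext ap bp")
    case True
    then show ?thesis using NN_ARC[OF nA nB dA dB ap bp] unfolding interval_defined_def by blast
  next
    case False
    then have "le_ext bp ap" using le_ext_total by blast
    then show ?thesis using NN_ARC[OF nB nA dB dA bp ap] unfolding interval_defined_def by blast
  qed
  then show ?thesis using ap bp by blast
qed


lemma TRANS: fixes D M N :: "real^2^2"
  assumes "det D > 0" "det M \<noteq> 0" "det N \<noteq> 0" "attr_pt M p" "attr_pt N q" "interval_defined M N p q"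
  shows "\<exists>p q. attr_pt (D ** M ** matrix_inv D) p \<and> attr_pt (D ** N ** matrix_inv D) q
     \<and> interval_defined (D ** M ** matrix_inv D) (D ** N ** matrix_inv D) p q"
proof -
  have d: "det D \<noteq> 0" using assms(1) by simp
  show ?thesis using attr_conj[OF d assms(2,4)] attr_conj[OF d assms(3,5)] intdef_conj[OF assms(1,2,3,6)]
    by blast
qed

lemma conj_inv_back: fixes C M :: "real^2^2" assumes "det C \<noteq> 0"
  shows "matrix_inv C ** (C ** M ** matrix_inv C) ** matrix_inv (matrix_inv C) = M"
  using conj_back[OF assms, of M] by (simp add: minv_minv assms)

lemma conj_is_I: fixes C M :: "real^2^2" assumes "det C \<noteq> 0" "C ** M ** matrix_inv C = mat 1"
  shows "M = mat 1"
proof -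
  have "M = matrix_inv C ** mat 1 ** C" using conj_back[OF assms(1), of M] assms(2) by simp
  then show ?thesis using assms(1) by (simp add: minv_l)
qed

lemma trace_transpose2: "trace (transpose (M::real^2^2)) = trace M"
  by (simp add: trace2 transpose_def)

theorem lemma2p2:
  fixes A B :: "real^2^2"
  assumes "det A = 1" and "det B = 1"
    and "A ** B \<noteq> B ** A"
    and "trace A \<ge> 2" and "trace B \<ge> 2"
  shows "coherently_oriented A B \<longleftrightarrow>
    (\<exists>C :: real^2^2. det C = 1 \<and>
       (\<forall>i j. 0 \<le> (C ** A ** matrix_inv C) $ i $ j) \<and>
       (\<forall>i j. 0 \<le> (C ** B ** matrix_inv C) $ i $ j))"
proof
  note dA = assms(1) and dB = assms(2) and nc = assms(3) and tA = assms(4) and tB = assms(5)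
  have dAi: "det (matrix_inv A) = 1" and dBi: "det (matrix_inv B) = 1" using dA dB by (simp_all add: det_minv)
  have tAp: "trace A > 0" and tBp: "trace B > 0" using tA tB by simp_all
  assume "coherently_oriented A B"
  then obtain ap bp am bm where ap: "attr_pt A ap" and bp: "attr_pt B bp" and ip: "interval_defined A B ap bp"
    and am: "rep_pt A am" and bm: "rep_pt B bm"
    and im: "interval_defined (matrix_inv A) (matrix_inv B) am bm"
    unfolding coherently_oriented_def by blast
  show "\<exists>C :: real^2^2. det C = 1 \<and>
       (\<forall>i j. 0 \<le> (C ** A ** matrix_inv C) $ i $ j) \<and>
       (\<forall>i j. 0 \<le> (C ** B ** matrix_inv C) $ i $ j)"
  proof (cases "ap = bp")
    case False
    then show ?thesis using ip INV[OF dA dB tAp tBp] unfolding interval_defined_def by metis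
  next
    case True
    have ne: "am \<noteq> bm"
    proof
      assume "am = bm"
      then have "A ** B = B ** A" using COMMON[OF dA dB ap _ am] bp bm True by simp
      then show False using nc by simp
    qed
    have tAi: "trace (matrix_inv A) > 0" and tBi: "trace (matrix_inv B) > 0"
      using tAp tBp dA dB by (simp_all add: trace_minv)
    obtain C where C: "det C = 1" "\<forall>i j. 0 \<le> (C ** matrix_inv A ** matrix_inv C) $ i $ j"
      "\<forall>i j. 0 \<le> (C ** matrix_inv B ** matrix_inv C) $ i $ j"
      using im ne INV[OF dAi dBi tAi tBi] unfolding interval_defined_def by metis
    show ?thesis using COMPL[OF C(1) dA C(2)] COMPL[OF C(1) dB C(3)] by blast
  qed
next
  note dA = assms(1) and dB = assms(2) and nc = assms(3) and tA = assms(4) and tB = assms(5)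
  assume "\<exists>C :: real^2^2. det C = 1 \<and>
       (\<forall>i j. 0 \<le> (C ** A ** matrix_inv C) $ i $ j) \<and>
       (\<forall>i j. 0 \<le> (C ** B ** matrix_inv C) $ i $ j)"
  then obtain C where dC: "det C = 1" and nA: "\<forall>i j. 0 \<le> (C ** A ** matrix_inv C) $ i $ j"
    and nB: "\<forall>i j. 0 \<le> (C ** B ** matrix_inv C) $ i $ j" by blast
  define A' where "A' = C ** A ** matrix_inv C"
  define B' where "B' = C ** B ** matrix_inv C"
  have dC0: "det C \<noteq> 0" using dC by simp
  have dA': "det A' = 1" and dB': "det B' = 1" using dA dB dC0 by (simp_all add: A'_def B'_def det_conj)
  have tA': "trace A' \<ge> 2" and tB': "trace B' \<ge> 2" using tA tB dC0 by (simp_all add: A'_def B'_def trace_conj)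
  have AnI: "A \<noteq> mat 1" using nc by auto
  have BnI: "B \<noteq> mat 1" using nc by auto
  have iA': "A' \<noteq> mat 1" using conj_is_I[OF dC0] AnI unfolding A'_def by blast
  have iB': "B' \<noteq> mat 1" using conj_is_I[OF dC0] BnI unfolding B'_def by blast
  have nA': "\<forall>i j. 0 \<le> A'$i$j" and nB': "\<forall>i j. 0 \<le> B'$i$j" using nA nB by (simp_all add: A'_def B'_def)
  obtain p q where pq: "attr_pt A' p" "attr_pt B' q" "interval_defined A' B' p q"
    using NN_COH[OF nA' nB' dA' dB' tA' tB' iA' iB'] by blast
  define D where "D = matrix_inv C"
  have dD: "det D = 1" using dC by (simp add: D_def det_minv)
  have bA: "D ** A' ** matrix_inv D = A" unfolding D_def A'_def by (rule conj_inv_back[OF dC0])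
  have bB: "D ** B' ** matrix_inv D = B" unfolding D_def B'_def by (rule conj_inv_back[OF dC0])
  have plus: "\<exists>ap bp. attr_pt A ap \<and> attr_pt B bp \<and> interval_defined A B ap bp"
    using TRANS[of D A' B' p q] dD dA' dB' pq bA bB by simp
  define A'' where "A'' = transpose A'"
  define B'' where "B'' = transpose B'"
  have nA'': "\<forall>i j. 0 \<le> A''$i$j" and nB'': "\<forall>i j. 0 \<le> B''$i$j" using nA' nB'
    by (simp_all add: A''_def B''_def transpose_def)
  have dA'': "det A'' = 1" and dB'': "det B'' = 1" using dA' dB' by (simp_all add: A''_def B''_def)
  have tA'': "trace A'' \<ge> 2" and tB'': "trace B'' \<ge> 2" using tA' tB'
    by (simp_all add: A''_def B''_def trace_transpose2)
  have iA'': "A'' \<noteq> mat 1" using iA' unfolding A''_def by (metis transpose_mat transpose_transpose)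
  have iB'': "B'' \<noteq> mat 1" using iB' unfolding B''_def by (metis transpose_mat transpose_transpose)
  obtain p2 q2 where pq2: "attr_pt A'' p2" "attr_pt B'' q2" "interval_defined A'' B'' p2 q2"
    using NN_COH[OF nA'' nB'' dA'' dB'' tA'' tB'' iA'' iB''] by blast
  define E where "E = Rm ** C"
  have dE: "det E = 1" using dC by (simp add: E_def det_mul det_Rm)
  have dE0: "det E \<noteq> 0" using dE by simp
  define D2 where "D2 = matrix_inv E"
  have dD2: "det D2 = 1" using dE by (simp add: D2_def det_minv)
  have eA'': "A'' = E ** matrix_inv A ** matrix_inv E"
  proof -
    have "A'' = Rm ** matrix_inv A' ** matrix_inv Rm" unfolding A''_def by (rule Rm_transpose[OF dA', symmetric])
    also have "matrix_inv A' = C ** matrix_inv A ** matrix_inv C" unfolding A'_def using dC0 dA by (simp add: minv_conj)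
    finally show ?thesis unfolding E_def using conj_conj[of Rm C "matrix_inv A"] det_Rm dC0 by simp
  qed
  have eB'': "B'' = E ** matrix_inv B ** matrix_inv E"
  proof -
    have "B'' = Rm ** matrix_inv B' ** matrix_inv Rm" unfolding B''_def by (rule Rm_transpose[OF dB', symmetric])
    also have "matrix_inv B' = C ** matrix_inv B ** matrix_inv C" unfolding B'_def using dC0 dB by (simp add: minv_conj)
    finally show ?thesis unfolding E_def using conj_conj[of Rm C "matrix_inv B"] det_Rm dC0 by simp
  qed
  have bA2: "D2 ** A'' ** matrix_inv D2 = matrix_inv A" unfolding D2_def eA'' by (rule conj_inv_back[OF dE0])
  have bB2: "D2 ** B'' ** matrix_inv D2 = matrix_inv B" unfolding D2_def eB'' by (rule conj_inv_back[OF dE0])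
  have minus: "\<exists>am bm. attr_pt (matrix_inv A) am \<and> attr_pt (matrix_inv B) bm
      \<and> interval_defined (matrix_inv A) (matrix_inv B) am bm"
    using TRANS[of D2 A'' B'' p2 q2] dD2 dA'' dB'' pq2 bA2 bB2 by simp
  show "coherently_oriented A B" unfolding coherently_oriented_def rep_pt_def using plus minus by blast
qed

end
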